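(* Let $k$ be a field of characteristic $0$ and $t$ transcendental over $k$. Let $m=\frac{at^2+bt+c}{dt^2+et+f}$ with $a,b,c,d,e,f\in k$, $a,d$ not both zero, $ae=bd$, $af\neq cd$, $b^2\neq 4ac$ and $e^2\neq 4df$. Then $[k(t):k(m)]=2$ and $\sqrt{m}\notin k(t)$. *)

theory Defs
  imports "HOL-Algebra.Algebraic_Closure_Type" "HOL-Algebra.Generated_Fields"
begin

text \<open>The rational function field k(t) is modelled as the fraction field
  \<open>'a poly fract\<close> of the polynomial ring k[t], where k is the type \<open>'a\<close>.\<close>

type_synonym 'a ratfun = "'a poly fract"

definition ratfun_var :: "'a::field ratfun" where
  "ratfun_var = Fract [:0, 1:] 1"

definition ratfun_const :: "'a::field \<Rightarrow> 'a ratfun" where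
  "ratfun_const c = Fract [:c:] 1"

abbreviation ratfun_ring :: "'a::field ratfun ring" where
  "ratfun_ring \<equiv> ring_of_type_algebra"

definition subfield_gen :: "'a::field ratfun \<Rightarrow> 'a ratfun set" where
  "subfield_gen m = generate_field ratfun_ring (insert m (range ratfun_const))"

end

theory Submission
  imports Defs "HOL-Computational_Algebra.Polynomial_Factorial"
begin

lemma rot_simps:
  "carrier (ring_of_type_algebra :: 'a::field ring) = UNIV"
  "(\<otimes>\<^bsub>ring_of_type_algebra\<^esub>) = ((*) :: 'a::field \<Rightarrow> _)"
  "(\<oplus>\<^bsub>ring_of_type_algebra\<^esub>) = ((+) :: 'a::field \<Rightarrow> _)"
  "\<one>\<^bsub>ring_of_type_algebra\<^esub> = (1::'a::field)"
  "\<zero>\<^bsub>ring_of_type_algebra\<^esub> = (0::'a::field)"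
  by (auto simp: ring_of_type_algebra_def)

lemma rot_ainv: "\<ominus>\<^bsub>ring_of_type_algebra\<^esub> x = - (x::'a::field)"
proof -
  interpret field "ring_of_type_algebra :: 'a ring" by rule
  show ?thesis by (rule minus_equality) (auto simp: rot_simps)
qed

lemma rot_inv: "(x::'a::field) \<noteq> 0 \<Longrightarrow> inv\<^bsub>ring_of_type_algebra\<^esub> x = inverse x"
proof -
  interpret field "ring_of_type_algebra :: 'a ring" by rule
  assume "x \<noteq> 0" thus ?thesis by (intro comm_inv_char) (auto simp: rot_simps)
qed

lemma subfield_rot:
  fixes K :: "'a::field set"
  assumes "1 \<in> K" "\<And>x y. x\<in>K \<Longrightarrow> y\<in>K \<Longrightarrow> x - y \<in> K" "\<And>x y. x\<in>K \<Longrightarrow> y\<in>K \<Longrightarrow> x * y \<in> K"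
    "\<And>x. x \<in> K \<Longrightarrow> x \<noteq> 0 \<Longrightarrow> inverse x \<in> K"
  shows "subfield K ring_of_type_algebra"
proof -
  interpret field "ring_of_type_algebra :: 'a ring" by rule
  have m: "x \<in> K \<Longrightarrow> -x \<in> K" for x using assms(2)[OF assms(1) assms(1)] assms(2)[of 0 x] by auto
  have p: "x \<in> K \<Longrightarrow> y \<in> K \<Longrightarrow> x + y \<in> K" for x y using assms(2)[of x "-y"] m[of y] by auto
  show ?thesis
    apply (rule subfieldI')
     apply (rule subringI)
    using assms m p by (auto simp: rot_simps rot_ainv rot_inv)
qed

lemma gen_closed:
  fixes H :: "'a::field set"
  defines "K \<equiv> generate_field ring_of_type_algebra H"
  shows "H \<subseteq> K" "1 \<in> K" "x\<in>K \<Longrightarrow> y\<in>K \<Longrightarrow> x - y \<in> K" "x\<in>K \<Longrightarrow> y\<in>K \<Longrightarrow> x + y \<in> K"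
    "x\<in>K \<Longrightarrow> y\<in>K \<Longrightarrow> x * y \<in> K" "x \<in> K \<Longrightarrow> -x \<in> K"
    "x \<in> K \<Longrightarrow> x \<noteq> 0 \<Longrightarrow> inverse x \<in> K" "x\<in>K \<Longrightarrow> y\<in>K \<Longrightarrow> x / y \<in> K"
    "0 \<in> K"
proof -
  interpret field "ring_of_type_algebra :: 'a ring" by rule
  have sf: "subfield K ring_of_type_algebra" unfolding K_def
    by (rule generate_field_is_subfield) (auto simp: rot_simps)
  note sr = subringE[OF subfieldE(1)[OF sf]]
  show "H \<subseteq> K" unfolding K_def by (rule generate_field.incl[THEN subsetI]) 
  show "1 \<in> K" using sr(3) by (simp add: rot_simps)
  show "x\<in>K \<Longrightarrow> y\<in>K \<Longrightarrow> x * y \<in> K" using sr(6) by (simp add: rot_simps)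
  show "x\<in>K \<Longrightarrow> y\<in>K \<Longrightarrow> x + y \<in> K" using sr(7) by (simp add: rot_simps)
  show mi: "x \<in> K \<Longrightarrow> -x \<in> K" for x using sr(5) by (simp add: rot_ainv)
  show di: "x\<in>K \<Longrightarrow> y\<in>K \<Longrightarrow> x - y \<in> K" for x y using sr(7)[of x "-y"] mi[of y] by (simp add: rot_simps)
  show "0 \<in> K" using di[of 1 1] sr(3) by (simp add: rot_simps)
  show iv: "x \<in> K \<Longrightarrow> x \<noteq> 0 \<Longrightarrow> inverse x \<in> K" for x
    using subfield_m_inv(1)[OF sf, of x] by (simp add: rot_inv rot_simps)
  show "x\<in>K \<Longrightarrow> y\<in>K \<Longrightarrow> x / y \<in> K"
    using iv[of y] sr(6)[of x "inverse y"] by (cases "y = 0") (auto simp: rot_simps divide_inverse)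
qed

lemma nonsq:
  fixes a b c d e f :: "'a::field_char_0" and W :: "'a poly"
  assumes a: "a \<noteq> 0" and d: "d \<noteq> 0" and h1: "a*e = b*d" and h2: "a*f \<noteq> c*d"
  shows "W^2 \<noteq> [:c,b,a:] * [:f,e,d:]"
proof
  assume eq: "W^2 = [:c,b,a:] * [:f,e,d:]"
  define \<beta> where "\<beta> = b / a"
  have b: "b = a * \<beta>" using a by (simp add: \<beta>_def)
  have e: "e = d * \<beta>" using a h1 by (simp add: \<beta>_def field_simps)
  define h where "h = [:-\<beta>/2, 1:]"
  define c' where "c' = c - a*\<beta>^2/4"
  define f' where "f' = f - d*\<beta>^2/4"
  have N: "pcompose [:c,b,a:] h = [:c',0,a:]"
    by (simp add: h_def c'_def b pcompose_pCons algebra_simps power2_eq_square)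
  have D: "pcompose [:f,e,d:] h = [:f',0,d:]"
    by (simp add: h_def f'_def e pcompose_pCons algebra_simps power2_eq_square)
  define V where "V = pcompose W h"
  have eqV: "V^2 = [:c',0,a:] * [:f',0,d:]"
  proof -
    have "V^2 = pcompose (W^2) h" by (simp add: V_def power2_eq_square pcompose_mult)
    also have "\<dots> = pcompose [:c,b,a:] h * pcompose [:f,e,d:] h" unfolding eq by (rule pcompose_mult)
    finally show ?thesis unfolding N D .
  qed
  have "degree (V^2) = 4" unfolding eqV using a d by (simp add: degree_mult_eq)
  moreover have "V \<noteq> 0" using calculation by (auto simp: power2_eq_square)
  ultimately have dV: "degree V = 2" using degree_power_eq[of V 2] by simp
  have Vf: "V = [:coeff V 0, coeff V 1, coeff V 2:]"
  proof (rule poly_eqI)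
    fix n show "coeff V n = coeff [:coeff V 0, coeff V 1, coeff V 2:] n"
      using dV coeff_eq_0[of V n] by (cases n; cases "n - 1"; cases "n - 2") (auto simp: coeff_pCons numeral_2_eq_2)
  qed
  define r0 r1 r2 where r_def: "r0 = coeff V 0" "r1 = coeff V 1" "r2 = coeff V 2"
  have "[:r0,r1,r2:]^2 = [:c',0,a:] * [:f',0,d:]" using eqV Vf r_def by simp
  hence E: "r0*r0 = c'*f'" "r0*r1 + r1*r0 = 0" "r0*r2 + r1*r1 + r2*r0 = c'*d + a*f'"
     "r1*r2 + r2*r1 = 0" "r2*r2 = a*d"
    by (simp_all add: power2_eq_square algebra_simps)
  have r2: "r2 \<noteq> 0" using E(5) a d by auto
  have r1: "r1 = 0" using E(4) r2 by simp
  have "2*r0*r2 = c'*d + a*f'" using E(3) r1 by (simp add: algebra_simps)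
  hence "(c'*d + a*f')^2 = (2*r0*r2)^2" by simp
  hence "(c'*d + a*f')^2 = 4*(r0*r0)*(r2*r2)" by (simp add: power2_eq_square algebra_simps)
  hence "(c'*d + a*f')^2 = 4*(c'*f')*(a*d)" using E(1,5) by simp
  hence "(a*f' - c'*d)^2 = 0" by (simp add: power2_eq_square algebra_simps)
  hence "a*f' - c'*d = 0" by simp
  moreover have "a*f' - c'*d = a*f - c*d" by (simp add: c'_def f'_def algebra_simps)
  ultimately show False using h2 by simp
qed

lemma pf_add: "Fract (p::'a::field poly) 1 + Fract q 1 = Fract (p+q) 1" by simp
lemma pf_mult: "Fract (p::'a::field poly) 1 * Fract q 1 = Fract (p*q) 1" by simp
lemma pf_diff: "Fract (p::'a::field poly) 1 - Fract q 1 = Fract (p-q) 1" by simp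
lemma pf_pow: "Fract (p::'a::field poly) 1 ^ n = Fract (p^n) 1"
  by (induct n) (simp_all add: One_fract_def)
lemma pf_div: "(q::'a::field poly) \<noteq> 0 \<Longrightarrow> Fract p q = Fract p 1 / Fract q 1" by simp
lemma pf_eq: "Fract (p::'a::field poly) 1 = Fract q 1 \<longleftrightarrow> p = q" by (simp add: eq_fract)
lemma pf_0: "Fract (p::'a::field poly) 1 = 0 \<longleftrightarrow> p = 0" by (simp add: eq_fract Zero_fract_def)

lemma cst_add: "ratfun_const (x+y) = ratfun_const x + ratfun_const (y::'a::field)"
  by (simp add: ratfun_const_def)
lemma cst_mult: "ratfun_const (x*y) = ratfun_const x * ratfun_const (y::'a::field)"
  by (simp add: ratfun_const_def mult.commute)
lemma cst_diff: "ratfun_const (x-y) = ratfun_const x - ratfun_const (y::'a::field)"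
  by (simp add: ratfun_const_def)
lemma cst_eq: "ratfun_const x = ratfun_const (y::'a::field) \<longleftrightarrow> x = y"
  by (simp add: ratfun_const_def pf_eq)
lemma cst_0: "ratfun_const x = 0 \<longleftrightarrow> x = (0::'a::field)"
  by (simp add: ratfun_const_def pf_0)

lemma prime_factor_ex:
  fixes B :: "'a::field poly"
  shows "B \<noteq> 0 \<Longrightarrow> \<not> is_unit B \<Longrightarrow> \<exists>p. prime_elem p \<and> p dvd B"
proof (induction "degree B" arbitrary: B rule: less_induct)
  case less
  show ?case
  proof (cases "irreducible B")
    case True
    then show ?thesis by (intro exI[of _ B]) (simp add: field_poly_irreducible_imp_prime)
  next
    case False
    then obtain x y where xy: "B = x * y" "\<not> is_unit x" "\<not> is_unit y"
      using less.prems by (auto simp: irreducible_def)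
    have x0: "x \<noteq> 0" "y \<noteq> 0" using xy less.prems by auto
    have "degree y \<noteq> 0" using xy(3) x0(2) by (auto simp: is_unit_iff_degree)
    then have "degree x < degree B" using x0 xy(1) by (simp add: degree_mult_eq)
    from less.hyps[OF this x0(1) xy(2)] obtain p where "prime_elem p" "p dvd x" by blast
    then show ?thesis using xy(1) by auto
  qed
qed

lemma sq_poly:
  fixes A B P :: "'a::field poly"
  shows "B \<noteq> 0 \<Longrightarrow> A^2 = P * B^2 \<Longrightarrow> \<exists>W. W^2 = P"
proof (induction "degree B" arbitrary: A B rule: less_induct)
  case less
  show ?case
  proof (cases "is_unit B")
    case True
    then obtain q where q1: "B = [:q:]" "q dvd 1" by (auto simp: is_unit_poly_iff)
    then have q: "B = [:q:]" "q \<noteq> 0" by auto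
    have "A^2 = P * [:q:]^2" using less.prems(2) q(1) by simp
    also have "[:q:]^2 = [:q^2:]" by (simp add: power2_eq_square)
    also have "P * [:q^2:] = smult (q^2) P" by simp
    finally have A2: "A^2 = smult (q^2) P" .
    have "(smult (inverse q) A)^2 = smult ((inverse q)^2) (A^2)" by (rule smult_power)
    also have "\<dots> = smult ((inverse q)^2 * q^2) P" unfolding A2 by simp
    also have "(inverse q)^2 * q^2 = 1" using q(2) by (simp add: power2_eq_square field_simps)
    finally have "(smult (inverse q) A)^2 = P" by simp
    then show ?thesis by blast
  next
    case False
    from prime_factor_ex[OF less.prems(1) this] obtain p where p: "prime_elem p" "p dvd B" by blast
    then obtain B' where B': "B = p * B'" by blast
    have "A^2 = p * (P * p * B'^2)" unfolding less.prems(2) B' by (simp add: power_mult_distrib power2_eq_square mult_ac)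
    then have "p dvd A^2" by (rule dvdI)
    then have "p dvd A" using p(1) prime_elem_dvd_power by blast
    then obtain A' where A': "A = p * A'" by blast
    have p0: "p \<noteq> 0" using p(1) by auto
    have B'0: "B' \<noteq> 0" using less.prems(1) B' by auto
    have "p^2 * A'^2 = p^2 * (P * B'^2)" using less.prems(2) unfolding A' B' by (simp add: power_mult_distrib mult_ac)
    then have eq: "A'^2 = P * B'^2" using p0 by simp
    have "\<not> is_unit p" using p(1) by (simp add: prime_elem_def)
    then have "degree p \<noteq> 0" using p0 is_unit_iff_degree by blast
    then have "degree B' < degree B" using B' p0 B'0 by (simp add: degree_mult_eq)
    from less.hyps[OF this B'0 eq] show ?thesis .
  qed
qed

lemma root_poly:
  fixes y :: "'a::field ratfun"
  assumes "y^2 = Fract P 1"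
  shows "\<exists>W. W^2 = P"
proof -
  obtain A B where y: "y = Fract A B" "B \<noteq> 0" by (cases y)
  then have "Fract (A^2) (B^2) = Fract P 1" using assms by (simp add: power2_eq_square)
  then have "A^2 = P * B^2" using y by (simp add: eq_fract)
  from sq_poly[OF y(2) this] show ?thesis .
qed

definition Sinv :: "'a::field poly \<Rightarrow> 'a ratfun set" where
  "Sinv h = {r. \<exists>p q. q \<noteq> 0 \<and> r = Fract p q \<and> pcompose p h = p \<and> pcompose q h = q}"

lemma Sinv_subfield: "subfield (Sinv h) ratfun_ring"
proof (rule subfield_rot)
  show "1 \<in> Sinv h" unfolding Sinv_def
    by (rule CollectI, rule exI[of _ 1], rule exI[of _ 1]) (simp add: One_fract_def pcompose_1)
next
  fix x y assume "x \<in> Sinv h" "y \<in> Sinv h"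
  then obtain p1 q1 p2 q2 where X: "q1 \<noteq> 0" "x = Fract p1 q1" "pcompose p1 h = p1" "pcompose q1 h = q1"
    and Y: "q2 \<noteq> 0" "y = Fract p2 q2" "pcompose p2 h = p2" "pcompose q2 h = q2"
    unfolding Sinv_def by blast
  show "x - y \<in> Sinv h" unfolding Sinv_def
    by (rule CollectI, rule exI[of _ "p1*q2 - p2*q1"], rule exI[of _ "q1*q2"])
       (simp add: X Y pcompose_diff pcompose_mult)
  show "x * y \<in> Sinv h" unfolding Sinv_def
    by (rule CollectI, rule exI[of _ "p1*p2"], rule exI[of _ "q1*q2"])
       (simp add: X Y pcompose_mult)
next
  fix x assume "x \<in> Sinv h" "x \<noteq> 0"
  then obtain p q where X: "q \<noteq> 0" "x = Fract p q" "pcompose p h = p" "pcompose q h = q"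
    unfolding Sinv_def by blast
  have "p \<noteq> 0" using X \<open>x \<noteq> 0\<close> by (auto simp: Zero_fract_def eq_fract)
  then show "inverse x \<in> Sinv h" unfolding Sinv_def
    by (intro CollectI exI[of _ q] exI[of _ p]) (simp add: X)
qed

lemma t_notin_Sinv:
  fixes \<beta> :: "'a::field_char_0"
  shows "Fract [:0,1:] 1 \<notin> Sinv [:-\<beta>, -1:]"
proof
  assume "Fract [:0,1:] 1 \<in> Sinv [:-\<beta>, -1:]"
  then obtain p q where X: "q \<noteq> 0" "Fract [:0,1:] 1 = Fract p q" "pcompose p [:-\<beta>, -1:] = p"
     "pcompose q [:-\<beta>, -1:] = q"
    unfolding Sinv_def by blast
  have eq: "[:0,1:] * q = p" using X(1,2) by (simp add: eq_fract)
  have "pcompose ([:0,1:] * q) [:-\<beta>, -1:] = [:-\<beta>, -1:] * q"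
    by (simp add: pcompose_mult X(4) pcompose_pCons)
  then have "[:-\<beta>, -1:] * q = [:0,1:] * q" using eq X(3) by simp
  then have "[:-\<beta>, -1:] = ([:0,1:] :: 'a poly)" by (simp only: mult_right_cancel[OF X(1)])
  then show False by simp
qed

lemma spanning:
  fixes K :: "'a::field ratfun set" and t u \<beta>
  assumes cl: "\<And>x y. x\<in>K \<Longrightarrow> y\<in>K \<Longrightarrow> x - y \<in> K" "\<And>x y. x\<in>K \<Longrightarrow> y\<in>K \<Longrightarrow> x + y \<in> K"
    "\<And>x y. x\<in>K \<Longrightarrow> y\<in>K \<Longrightarrow> x * y \<in> K" "\<And>x y. x\<in>K \<Longrightarrow> y\<in>K \<Longrightarrow> x / y \<in> K"
    "\<And>c. ratfun_const c \<in> K" "0 \<in> K" "1 \<in> K"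
    and tK: "ratfun_var \<notin> K"
    and uK: "ratfun_var^2 + ratfun_const \<beta> * ratfun_var \<in> K"
  shows "\<exists>x y. x \<in> K \<and> y \<in> K \<and> r = x * ratfun_var + y"
proof -
  define t where "t = (ratfun_var :: 'a ratfun)"
  define u where "u = t^2 + ratfun_const \<beta> * t"
  have uK': "u \<in> K" using uK by (simp add: u_def t_def)
  have tK': "t \<notin> K" using tK by (simp add: t_def)
  define bb where "bb = ratfun_const \<beta>"
  have bK: "bb \<in> K" using cl(5) by (simp add: bb_def)
  have poly: "\<exists>x y. x \<in> K \<and> y \<in> K \<and> Fract p 1 = x * t + y" for p :: "'a poly"
  proof (induction p)
    case 0
    show ?case using cl(6) by (intro exI[of _ 0]) (simp add: Zero_fract_def)
  next
    case (pCons c p)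
    then obtain x y where xy: "x \<in> K" "y \<in> K" "Fract p 1 = x * t + y" by blast
    have "pCons c p = [:c:] + [:0,1:] * p" by simp
    then have "Fract (pCons c p) 1 = ratfun_const c + t * Fract p 1"
      by (simp add: t_def ratfun_var_def ratfun_const_def)
    also have "\<dots> = (y - x * bb) * t + (x * u + ratfun_const c)"
      unfolding xy(3) u_def bb_def by (simp add: algebra_simps power2_eq_square)
    finally have st: "Fract (pCons c p) 1 = (y - x * bb) * t + (x * u + ratfun_const c)" .
    have "y - x * bb \<in> K" "x * u + ratfun_const c \<in> K" using xy bK uK' by (simp_all add: cl)
    with st show ?case by blast
  qed
  obtain p q where r: "r = Fract p q" "q \<noteq> 0" by (cases r)
  obtain x y where q: "x \<in> K" "y \<in> K" "Fract q 1 = x * t + y" using poly by blast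
  obtain x1 y1 where p: "x1 \<in> K" "y1 \<in> K" "Fract p 1 = x1 * t + y1" using poly by blast
  have q0: "x * t + y \<noteq> 0" using q(3) r(2) by (simp add: pf_0[symmetric])
  define q' where "q' = (y - x * bb) - x * t"
  define D0 where "D0 = y*y - x*y*bb - x*x*u"
  have D0K: "D0 \<in> K" unfolding D0_def using q bK uK' by (simp add: cl)
  have prod: "(x * t + y) * q' = D0" unfolding q'_def D0_def u_def bb_def
    by (simp add: algebra_simps power2_eq_square)
  have D00: "D0 \<noteq> 0"
  proof
    assume "D0 = 0"
    then have "q' = 0" using prod q0 by simp
    then have xt: "x * t = y - x * bb" unfolding q'_def by simp
    show False
    proof (cases "x = 0")
      case True then show False using xt q0 by simp
    next
      case False
      then have "t = (y - x * bb) / x" using xt by (simp add: field_simps)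
      moreover have "(y - x * bb) / x \<in> K" using q bK by (simp add: cl)
      ultimately show False using tK' by simp
    qed
  qed
  have "r = (x1 * t + y1) / (x * t + y)" unfolding r(1) pf_div[OF r(2)] p(3) q(3) ..
  also have "\<dots> = (x1 * t + y1) * q' / D0" using prod[symmetric] D00 q0
    by (simp add: field_simps)
  also have "(x1 * t + y1) * q' = (x1*y - y1*x) * t + (y1*y - y1*x*bb - x1*x*u)"
    unfolding q'_def u_def bb_def by (simp add: algebra_simps power2_eq_square)
  also have "\<dots> / D0 = ((x1*y - y1*x)/D0) * t + (y1*y - y1*x*bb - x1*x*u)/D0"
    by (simp add: add_divide_distrib)
  finally have "r = ((x1*y - y1*x)/D0) * t + (y1*y - y1*x*bb - x1*x*u)/D0" .
  moreover have "(x1*y - y1*x)/D0 \<in> K" using p q D0K by (simp add: cl)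
  moreover have "(y1*y - y1*x*bb - x1*x*u)/D0 \<in> K" using p q D0K bK uK' by (simp add: cl)
  ultimately show ?thesis unfolding t_def by blast
qed

theorem lemma2p4:
  fixes a b c d e f :: "'a::field_char_0"
  defines "t \<equiv> (ratfun_var :: 'a ratfun)"
  defines "m \<equiv> (ratfun_const a * t ^ 2 + ratfun_const b * t + ratfun_const c) /
                (ratfun_const d * t ^ 2 + ratfun_const e * t + ratfun_const f)"
  assumes "a \<noteq> 0 \<or> d \<noteq> 0"
    and "a * e = b * d"
    and "a * f \<noteq> c * d"
    and "b ^ 2 \<noteq> 4 * a * c"
    and "e ^ 2 \<noteq> 4 * d * f"
  shows "ring.dimension ratfun_ring 2 (subfield_gen m) (carrier ratfun_ring)
         \<and> \<not> (\<exists>y :: 'a ratfun. y ^ 2 = m)"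
proof -
  note h = assms(3-7)
  have a: "a \<noteq> 0"
  proof
    assume a0: "a = 0"
    then have "d \<noteq> 0" using h(1) by simp
    then have "b = 0" using h(2) a0 by simp
    then show False using h(4) a0 by simp
  qed
  have d: "d \<noteq> 0"
  proof
    assume d0: "d = 0"
    then have "e = 0" using h(2) a by simp
    then show False using h(5) d0 by simp
  qed
  define N where "N = [:c,b,a:]"
  define D where "D = [:f,e,d:]"
  have D0: "D \<noteq> 0" using d by (simp add: D_def)
  have NF: "ratfun_const a * t^2 + ratfun_const b * t + ratfun_const c = Fract N 1"
    unfolding t_def ratfun_var_def ratfun_const_def pf_pow N_def by (simp add: power2_eq_square)
  have DF: "ratfun_const d * t^2 + ratfun_const e * t + ratfun_const f = Fract D 1"
    unfolding t_def ratfun_var_def ratfun_const_def pf_pow D_def by (simp add: power2_eq_square)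
  have mF: "m = Fract N D" unfolding m_def NF DF using D0 by simp
  have part2: "\<not> (\<exists>y :: 'a ratfun. y ^ 2 = m)"
  proof
    assume "\<exists>y :: 'a ratfun. y ^ 2 = m"
    then obtain y :: "'a ratfun" where y: "y^2 = m" by blast
    have "(y * Fract D 1)^2 = y^2 * (Fract D 1)^2" by (rule power_mult_distrib)
    also have "\<dots> = Fract N D * Fract (D^2) 1" unfolding y mF pf_pow ..
    also have "\<dots> = Fract (N*D) 1" using D0 by (simp add: eq_fract power2_eq_square)
    finally obtain W where "W^2 = N * D" using root_poly by blast
    then show False using nonsq[OF a d h(2) h(3)] unfolding N_def D_def by blast
  qed
  define \<beta> where "\<beta> = b / a"
  have b: "b = a * \<beta>" using a by (simp add: \<beta>_def)
  have e: "e = d * \<beta>" using a h(2) by (simp add: \<beta>_def field_simps)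
  define H where "H = insert m (range ratfun_const)"
  define K where "K = subfield_gen m"
  have KH: "K = generate_field ring_of_type_algebra H" unfolding K_def H_def subfield_gen_def ..
  note cl = gen_closed[where H = H, folded KH]
  have cK: "ratfun_const x \<in> K" for x using cl(1) unfolding H_def by blast
  have mK: "m \<in> K" using cl(1) unfolding H_def by blast
  define u where "u = t^2 + ratfun_const \<beta> * t"
  have NF2: "Fract N 1 = ratfun_const a * u + ratfun_const c"
    unfolding NF[symmetric] u_def b cst_mult by (simp add: algebra_simps)
  have DF2: "Fract D 1 = ratfun_const d * u + ratfun_const f"
    unfolding DF[symmetric] u_def e cst_mult by (simp add: algebra_simps)
  have Dne: "ratfun_const d * u + ratfun_const f \<noteq> 0" using D0 DF2 pf_0 by metis
  have mu: "m * (ratfun_const d * u + ratfun_const f) = ratfun_const a * u + ratfun_const c"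
    unfolding mF pf_div[OF D0] NF2 DF2 using Dne by simp
  have den: "ratfun_const d * m - ratfun_const a \<noteq> 0"
  proof
    assume "ratfun_const d * m - ratfun_const a = 0"
    then have dm: "ratfun_const d * m = ratfun_const a" by simp
    have "ratfun_const d * (ratfun_const a * u + ratfun_const c) = (ratfun_const d * m) * (ratfun_const d * u + ratfun_const f)"
      unfolding mu[symmetric] by (simp add: mult.assoc)
    also have "\<dots> = ratfun_const a * (ratfun_const d * u + ratfun_const f)" unfolding dm ..
    finally have "ratfun_const d * (ratfun_const a * u + ratfun_const c) = ratfun_const a * (ratfun_const d * u + ratfun_const f)" .
    then have "ratfun_const (d * c) = ratfun_const (a * f)" by (simp add: cst_mult algebra_simps)
    then show False using h(3) by (simp add: cst_eq mult.commute)
  qed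
  have "(ratfun_const d * m - ratfun_const a) * u = ratfun_const c - ratfun_const f * m"
    using mu by (simp add: algebra_simps)
  then have "u = (ratfun_const c - ratfun_const f * m) / (ratfun_const d * m - ratfun_const a)"
    using den by (simp add: field_simps)
  then have uK: "u \<in> K" using cK mK by (simp add: cl)
  define hh :: "'a poly" where "hh = [:-\<beta>, -1:]"
  have HS: "H \<subseteq> Sinv hh"
  proof
    fix x assume "x \<in> H"
    then consider "x = m" | z where "x = ratfun_const z" unfolding H_def by blast
    then show "x \<in> Sinv hh"
    proof cases
      case 1
      have "pcompose N hh = N" unfolding N_def hh_def b
        by (simp add: pcompose_pCons algebra_simps)
      moreover have "pcompose D hh = D" unfolding D_def hh_def e
        by (simp add: pcompose_pCons algebra_simps)
      ultimately show ?thesis unfolding 1 mF Sinv_def using D0 by blast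
    next
      case 2
      show ?thesis unfolding 2 Sinv_def ratfun_const_def by (rule CollectI, rule exI[of _ "[:z:]"], rule exI[of _ 1]) (simp add: pcompose_1)
    qed
  qed
  have KS: "K \<subseteq> Sinv hh"
  proof -
    interpret field "ring_of_type_algebra :: 'a ratfun ring" by rule
    show ?thesis unfolding KH
      by (rule generate_field_min_subfield1[OF _ Sinv_subfield HS]) (simp add: rot_simps)
  qed
  have tK: "t \<notin> K" using KS t_notin_Sinv[of \<beta>] unfolding hh_def t_def ratfun_var_def by blast
  have span: "\<exists>x y. x \<in> K \<and> y \<in> K \<and> r = x * t + y" for r
    using spanning[of K \<beta> r] cl cK tK uK unfolding t_def u_def by blast
  interpret R: ring "ring_of_type_algebra :: 'a ratfun ring" by rule
  have L1: "R.line_extension K 1 {0} = K"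
    unfolding set_eq_iff R.line_extension_mem_iff rot_simps by auto
  have L2: "R.line_extension K t K = UNIV"
    unfolding set_eq_iff R.line_extension_mem_iff rot_simps using span by blast
  have "R.dimension (Suc (Suc 0)) K (R.line_extension K t (R.line_extension K 1 {\<zero>\<^bsub>ring_of_type_algebra\<^esub>}))"
    apply (rule R.Suc_dim)
      apply (simp add: rot_simps)
     apply (simp add: rot_simps L1 tK)
    apply (rule R.Suc_dim)
      apply (simp add: rot_simps)
     apply (simp add: rot_simps)
    apply (rule R.zero_dim)
    done
  then have "R.dimension 2 K (carrier ring_of_type_algebra)"
    unfolding L1 L2 rot_simps numeral_2_eq_2 .
  then show ?thesis using part2 unfolding K_def by simp
qed

end
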